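(* Assume that $N$ is a semi-free DG $B$-module. Let $N'$ be a second semi-free DG $B$-module built in the same way from modules $M_i'$ and maps $\xi_i'$, $\tau_i'$, $\delta_i'$, and $\alpha_i'$. Fix an integer $p$. A sequence of $R$-module homomorphisms $\{S_i\colon N_i\to N'_{i+p}\}$ is a DG $B$-module homomorphism $N\to N'$ of degree $p$ if and only if it is a degree-$p$ homomorphism $N\to N'$ of the underlying $R$-complexes such that for all integers $i$ we have $S_i=\begin{bmatrix}(-1)^pz_{i-1} & v_i \\ 0 & z_i\end{bmatrix}$ for some $z_i\colon M_i\to M'_{i+p}$ and $v_i\colon M_i\to M'_{i+p-1}$ and $v_{i+j}(\gamma_{i,s}m_j)=(-1)^{i(p+1)}\gamma_{i,s}v_j(m_j)$ and $z_{i+j}(\gamma_{i,s}m_j)=(-1)^{ip}\gamma_{i,s}z_j(m_j)$ for $s=1,\ldots,r_i$ and for all $m_j\in M_j$ for each integer $j$.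
   Context: Let $R$ be a commutative noetherian ring. Let $A$ be a (commutative, positively graded) DG $R$-algebra such that each $A_i$ is free over $R$ of finite rank, with fixed basis $\{\gamma_{i,1},\ldots,\gamma_{i,r_i}\}$ of $A_i$. Let $t\in R$ and $B=K^R(t)\otimes_R A$, where $K^R(t)$ is the Koszul complex on $t$; identify $B_i$ with $A_{i-1}\oplus A_i$ (column vectors). For cardinals $\beta_i$ ($\beta_i=0$ for $i\ll0$) set $M_i=\bigoplus_{j\ge0}A_j^{(\beta_{i-j})}$. Given $R$-linear maps $\xi_i\colon M_i\to M_{i-1}$, $\tau_i\colon M_i\to M_i$, $\delta_i\colon M_i\to M_{i-2}$, $\alpha_i\colon M_i\to M_{i-1}$, $N$ is the sequence with $N_i=M_{i-1}\oplus M_i$ and $\partial^N_i=\left[\begin{smallmatrix}\xi_{i-1}&\delta_i\\ \tau_{i-1}&\alpha_i\end{smallmatrix}\right]$, with $B$ acting by $\left[\begin{smallmatrix}a_{i-1}\\ a_i\end{smallmatrix}\right]\left[\begin{smallmatrix}m_{j-1}\\ m_j\end{smallmatrix}\right]=\left[\begin{smallmatrix}a_{i-1}m_j+(-1)^ia_im_{j-1}\\ a_im_j\end{smallmatrix}\right]$. A DG $B$-module homomorphism of degree $p$ is an $R$-complex homomorphism $f$ of degree $p$ with $f(bn)=(-1)^{p|b|}bf(n)$. *)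

theory Defs
  imports Complex_Main "HOL-Library.Function_Algebras" "HOL-Library.Product_Plus"
begin

definition sgnx :: "int \<Rightarrow> 'x::ab_group_add \<Rightarrow> 'x" where
  "sgnx k x = (if even k then x else - x)"

definition noetherian_cring :: "'r::comm_ring_1 itself \<Rightarrow> bool" where
  "noetherian_cring _ \<longleftrightarrow>
     (\<forall>I::'r set. module.subspace ((*) :: 'r \<Rightarrow> 'r \<Rightarrow> 'r) I \<longrightarrow>
        (\<exists>F. finite F \<and> I = module.span ((*) :: 'r \<Rightarrow> 'r \<Rightarrow> 'r) F))"

definition rlin :: "('r \<Rightarrow> 'x \<Rightarrow> 'x) \<Rightarrow> ('r \<Rightarrow> 'y \<Rightarrow> 'y) \<Rightarrow> 'x set \<Rightarrow> 'y set
                     \<Rightarrow> ('x::ab_group_add \<Rightarrow> 'y::ab_group_add) \<Rightarrow> bool" where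
  "rlin sc sc' X Y f \<longleftrightarrow> f ` X \<subseteq> Y \<and>
     (\<forall>x\<in>X. \<forall>y\<in>X. f (x + y) = f x + f y) \<and>
     (\<forall>c. \<forall>x\<in>X. f (sc c x) = sc' c (f x))"

text \<open>A is given inside an ambient R-module of type 'a (scalar action scA);
  Ac i is the homogeneous component A_i, mulA the product, oneA the unit,
  dA the differential.\<close>

definition cdga :: "('r::comm_ring_1 \<Rightarrow> 'a::ab_group_add \<Rightarrow> 'a) \<Rightarrow> (int \<Rightarrow> 'a set)
                    \<Rightarrow> ('a \<Rightarrow> 'a \<Rightarrow> 'a) \<Rightarrow> 'a \<Rightarrow> ('a \<Rightarrow> 'a) \<Rightarrow> bool" where
  "cdga scA Ac mulA oneA dA \<longleftrightarrow>
     module scA \<and>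
     (\<forall>i. module.subspace scA (Ac i)) \<and>
     (\<forall>i j. i \<noteq> j \<longrightarrow> Ac i \<inter> Ac j = {0}) \<and>
     (\<forall>i<0. Ac i = {0}) \<and>
     (\<forall>i j. \<forall>a\<in>Ac i. \<forall>b\<in>Ac j. mulA a b \<in> Ac (i + j)) \<and>
     (\<forall>i j. \<forall>a\<in>Ac i. \<forall>a'\<in>Ac i. \<forall>b\<in>Ac j.
        mulA (a + a') b = mulA a b + mulA a' b \<and> mulA b (a + a') = mulA b a + mulA b a') \<and>
     (\<forall>i j c. \<forall>a\<in>Ac i. \<forall>b\<in>Ac j.
        mulA (scA c a) b = scA c (mulA a b) \<and> mulA a (scA c b) = scA c (mulA a b)) \<and>
     (\<forall>i j k. \<forall>a\<in>Ac i. \<forall>b\<in>Ac j. \<forall>c\<in>Ac k. mulA (mulA a b) c = mulA a (mulA b c)) \<and>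
     oneA \<in> Ac 0 \<and>
     (\<forall>i. \<forall>a\<in>Ac i. mulA oneA a = a \<and> mulA a oneA = a) \<and>
     (\<forall>i j. \<forall>a\<in>Ac i. \<forall>b\<in>Ac j. mulA a b = sgnx (i * j) (mulA b a)) \<and>
     (\<forall>i. odd i \<longrightarrow> (\<forall>a\<in>Ac i. mulA a a = 0)) \<and>
     (\<forall>i. \<forall>a\<in>Ac i. dA a \<in> Ac (i - 1)) \<and>
     (\<forall>i. \<forall>a\<in>Ac i. \<forall>b\<in>Ac i. dA (a + b) = dA a + dA b) \<and>
     (\<forall>i c. \<forall>a\<in>Ac i. dA (scA c a) = scA c (dA a)) \<and>
     (\<forall>i. \<forall>a\<in>Ac i. dA (dA a) = 0) \<and>
     (\<forall>i j. \<forall>a\<in>Ac i. \<forall>b\<in>Ac j.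
        dA (mulA a b) = mulA (dA a) b + sgnx i (mulA a (dA b)))"

definition fixed_bases :: "('r::comm_ring_1 \<Rightarrow> 'a::ab_group_add \<Rightarrow> 'a) \<Rightarrow> (int \<Rightarrow> 'a set)
                           \<Rightarrow> (int \<Rightarrow> nat) \<Rightarrow> (int \<Rightarrow> nat \<Rightarrow> 'a) \<Rightarrow> bool" where
  "fixed_bases scA Ac r gam \<longleftrightarrow>
     (\<forall>i. (\<forall>s\<in>{1..r i}. gam i s \<in> Ac i) \<and> inj_on (gam i) {1..r i} \<and>
          module.independent scA (gam i ` {1..r i}) \<and>
          module.span scA (gam i ` {1..r i}) = Ac i)"

text \<open>E k is an index set of cardinality beta_k.  An element of
  M_i = (+)_j A_j^(beta_(i-j)) is a finitely supported m with m j e in A_j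
  and m j e = 0 unless e \<in> E (i - j).\<close>

type_synonym ('e, 'a) melt = "int \<Rightarrow> 'e \<Rightarrow> 'a"

definition Mcar :: "(int \<Rightarrow> 'a::zero set) \<Rightarrow> (int \<Rightarrow> 'e set) \<Rightarrow> int \<Rightarrow> ('e, 'a) melt set" where
  "Mcar Ac E i = {m. (\<forall>j e. m j e \<in> Ac j) \<and> (\<forall>j e. m j e \<noteq> 0 \<longrightarrow> e \<in> E (i - j)) \<and>
                     finite {(j, e). m j e \<noteq> 0}}"

definition scM :: "('r \<Rightarrow> 'a \<Rightarrow> 'a) \<Rightarrow> 'r \<Rightarrow> ('e, 'a) melt \<Rightarrow> ('e, 'a) melt" where
  "scM scA c m = (\<lambda>j e. scA c (m j e))"

definition actM :: "('a \<Rightarrow> 'a \<Rightarrow> 'a) \<Rightarrow> int \<Rightarrow> 'a \<Rightarrow> ('e, 'a) melt \<Rightarrow> ('e, 'a) melt" where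
  "actM mulA k a m = (\<lambda>j e. mulA a (m (j - k) e))"

section \<open>B = K(t) (x) A and the DG B-module N\<close>

definition Bcar :: "(int \<Rightarrow> 'a set) \<Rightarrow> int \<Rightarrow> ('a \<times> 'a) set" where
  "Bcar Ac i = Ac (i - 1) \<times> Ac i"

definition dB :: "('r \<Rightarrow> 'a \<Rightarrow> 'a) \<Rightarrow> ('a \<Rightarrow> 'a) \<Rightarrow> 'r \<Rightarrow> 'a \<times> 'a \<Rightarrow> 'a::ab_group_add \<times> 'a" where
  "dB scA dA t b = (- dA (fst b), scA t (fst b) + dA (snd b))"

definition Ncar :: "(int \<Rightarrow> 'a::zero set) \<Rightarrow> (int \<Rightarrow> 'e set) \<Rightarrow> int
                    \<Rightarrow> (('e, 'a) melt \<times> ('e, 'a) melt) set" where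
  "Ncar Ac E i = Mcar Ac E (i - 1) \<times> Mcar Ac E i"

definition scN :: "('r \<Rightarrow> 'a \<Rightarrow> 'a) \<Rightarrow> 'r \<Rightarrow> ('e, 'a) melt \<times> ('e, 'a) melt
                   \<Rightarrow> ('e, 'a) melt \<times> ('e, 'a) melt" where
  "scN scA c n = (scM scA c (fst n), scM scA c (snd n))"

definition actN :: "('a \<Rightarrow> 'a \<Rightarrow> 'a::ab_group_add) \<Rightarrow> int \<Rightarrow> 'a \<times> 'a
                    \<Rightarrow> ('e, 'a) melt \<times> ('e, 'a) melt \<Rightarrow> ('e, 'a) melt \<times> ('e, 'a) melt" where
  "actN mulA i b n =
     (actM mulA (i - 1) (fst b) (snd n) + sgnx i (actM mulA i (snd b) (fst n)),
      actM mulA i (snd b) (snd n))"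

definition dN :: "(int \<Rightarrow> ('e, 'a) melt \<Rightarrow> ('e, 'a) melt) \<Rightarrow> (int \<Rightarrow> ('e, 'a) melt \<Rightarrow> ('e, 'a) melt)
                  \<Rightarrow> (int \<Rightarrow> ('e, 'a) melt \<Rightarrow> ('e, 'a) melt) \<Rightarrow> (int \<Rightarrow> ('e, 'a) melt \<Rightarrow> ('e, 'a) melt)
                  \<Rightarrow> int \<Rightarrow> ('e, 'a::ab_group_add) melt \<times> ('e, 'a) melt \<Rightarrow> ('e, 'a) melt \<times> ('e, 'a) melt" where
  "dN \<xi> \<tau> \<delta> \<alpha> i n = (\<xi> (i - 1) (fst n) + \<delta> i (snd n), \<tau> (i - 1) (fst n) + \<alpha> i (snd n))"

text \<open>The data (E, xi, tau, delta, alpha) make N a semi-free DG B-module: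
  beta bounded below, the maps are R-linear of the stated degrees, and with the
  given B-action, dN is a differential satisfying the Leibniz rule (the
  underlying graded B-module is free on the basis of M, hence semi-free since
  beta_i = 0 for i << 0).\<close>

definition semifree_N :: "('r::comm_ring_1 \<Rightarrow> 'a \<Rightarrow> 'a) \<Rightarrow> (int \<Rightarrow> 'a set) \<Rightarrow> ('a \<Rightarrow> 'a \<Rightarrow> 'a)
     \<Rightarrow> ('a \<Rightarrow> 'a) \<Rightarrow> 'r \<Rightarrow> (int \<Rightarrow> 'e set)
     \<Rightarrow> (int \<Rightarrow> ('e, 'a) melt \<Rightarrow> ('e, 'a) melt) \<Rightarrow> (int \<Rightarrow> ('e, 'a) melt \<Rightarrow> ('e, 'a) melt)
     \<Rightarrow> (int \<Rightarrow> ('e, 'a) melt \<Rightarrow> ('e, 'a) melt) \<Rightarrow> (int \<Rightarrow> ('e, 'a::ab_group_add) melt \<Rightarrow> ('e, 'a) melt)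
     \<Rightarrow> bool" where
  "semifree_N scA Ac mulA dA t E \<xi> \<tau> \<delta> \<alpha> \<longleftrightarrow>
     (\<exists>k0. \<forall>k<k0. E k = {}) \<and>
     (\<forall>i. rlin (scM scA) (scM scA) (Mcar Ac E i) (Mcar Ac E (i - 1)) (\<xi> i)) \<and>
     (\<forall>i. rlin (scM scA) (scM scA) (Mcar Ac E i) (Mcar Ac E i) (\<tau> i)) \<and>
     (\<forall>i. rlin (scM scA) (scM scA) (Mcar Ac E i) (Mcar Ac E (i - 2)) (\<delta> i)) \<and>
     (\<forall>i. rlin (scM scA) (scM scA) (Mcar Ac E i) (Mcar Ac E (i - 1)) (\<alpha> i)) \<and>
     (\<forall>i. \<forall>n\<in>Ncar Ac E i. dN \<xi> \<tau> \<delta> \<alpha> (i - 1) (dN \<xi> \<tau> \<delta> \<alpha> i n) = 0) \<and>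
     (\<forall>i j. \<forall>b\<in>Bcar Ac i. \<forall>n\<in>Ncar Ac E j.
        dN \<xi> \<tau> \<delta> \<alpha> (i + j) (actN mulA i b n) =
          actN mulA (i - 1) (dB scA dA t b) n + sgnx i (actN mulA i b (dN \<xi> \<tau> \<delta> \<alpha> j n)))"

text \<open>A homomorphism of R-complexes of degree p is a family of R-linear maps
  S_i : N_i \<rightarrow> N'_(i+p) (no compatibility with differentials); it is a DG
  B-module homomorphism if moreover S(bn) = (-1)^(p|b|) b S(n).\<close>

definition rcomplex_hom :: "('r \<Rightarrow> 'a \<Rightarrow> 'a) \<Rightarrow> (int \<Rightarrow> 'a::ab_group_add set) \<Rightarrow> (int \<Rightarrow> 'e set)
     \<Rightarrow> (int \<Rightarrow> 'f set) \<Rightarrow> int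
     \<Rightarrow> (int \<Rightarrow> ('e, 'a) melt \<times> ('e, 'a) melt \<Rightarrow> ('f, 'a) melt \<times> ('f, 'a) melt) \<Rightarrow> bool" where
  "rcomplex_hom scA Ac E E' p S \<longleftrightarrow>
     (\<forall>i. rlin (scN scA) (scN scA) (Ncar Ac E i) (Ncar Ac E' (i + p)) (S i))"

definition dg_hom :: "('r \<Rightarrow> 'a \<Rightarrow> 'a) \<Rightarrow> (int \<Rightarrow> 'a::ab_group_add set) \<Rightarrow> ('a \<Rightarrow> 'a \<Rightarrow> 'a)
     \<Rightarrow> (int \<Rightarrow> 'e set) \<Rightarrow> (int \<Rightarrow> 'f set) \<Rightarrow> int
     \<Rightarrow> (int \<Rightarrow> ('e, 'a) melt \<times> ('e, 'a) melt \<Rightarrow> ('f, 'a) melt \<times> ('f, 'a) melt) \<Rightarrow> bool" where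
  "dg_hom scA Ac mulA E E' p S \<longleftrightarrow>
     rcomplex_hom scA Ac E E' p S \<and>
     (\<forall>i j. \<forall>b\<in>Bcar Ac i. \<forall>n\<in>Ncar Ac E j.
        S (i + j) (actN mulA i b n) = sgnx (p * i) (actN mulA i b (S j n)))"

end

theory Submission
  imports Defs
begin

lemma sgnx_add: "sgnx k (x + y) = sgnx k x + sgnx k y"
  by (simp add: sgnx_def)
lemma sgnx_zero[simp]: "sgnx k 0 = 0"
  by (simp add: sgnx_def)
lemma sgnx_pair: "sgnx k (a, b) = (sgnx k a, sgnx k b)"
  by (simp add: sgnx_def)

lemma lin_agree:
  fixes L1 L2 :: "'a::ab_group_add \<Rightarrow> 'x::ab_group_add"
  assumes md: "module scA" and sub: "module.subspace scA A" and sp: "module.span scA G = A"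
    and GA: "G \<subseteq> A"
    and a1: "\<forall>a\<in>A. \<forall>b\<in>A. L1 (a + b) = L1 a + L1 b"
    and a2: "\<forall>a\<in>A. \<forall>b\<in>A. L2 (a + b) = L2 a + L2 b"
    and s1: "\<forall>c. \<forall>a\<in>A. L1 (scA c a) = sc c (L1 a)"
    and s2: "\<forall>c. \<forall>a\<in>A. L2 (scA c a) = sc c (L2 a)"
    and ag: "\<forall>g\<in>G. L1 g = L2 g"
    and aA: "a \<in> A"
  shows "L1 a = L2 a"
proof -
  have z: "0 \<in> A" and ad: "\<And>x y. x \<in> A \<Longrightarrow> y \<in> A \<Longrightarrow> x + y \<in> A"
    and sA: "\<And>c x. x \<in> A \<Longrightarrow> scA c x \<in> A"
    using sub md by (auto simp: module.subspace_def)
  have l10: "L1 0 = 0" using a1 z by (metis add_cancel_left_left add_0)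
  have l20: "L2 0 = 0" using a2 z by (metis add_cancel_left_left add_0)
  have "a \<in> module.span scA G" using sp aA by simp
  have h0: "0 \<in> A \<and> L1 0 = L2 0" using z l10 l20 by simp
  have hS: "scA c x + y \<in> A \<and> L1 (scA c x + y) = L2 (scA c x + y)"
    if 2: "x \<in> G" "y \<in> A \<and> L1 y = L2 y" for c x y
  proof -
    have xA: "x \<in> A" using 2 GA by auto
    have "scA c x + y \<in> A" using ad sA xA 2 by blast
    moreover have "L1 (scA c x + y) = sc c (L1 x) + L1 y"
      using a1 s1 sA xA 2 by simp
    moreover have "L2 (scA c x + y) = sc c (L2 x) + L2 y"
      using a2 s2 sA xA 2 by simp
    ultimately show ?thesis using 2 ag by simp
  qed
  have "a \<in> A \<and> L1 a = L2 a"
    by (rule module.span_induct_alt[OF md, of a G "\<lambda>a. a \<in> A \<and> L1 a = L2 a"])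
       (use \<open>a \<in> module.span scA G\<close> h0 hS in auto)
  then show ?thesis by simp
qed


lemma sgnx_minus: "sgnx k (- x) = - sgnx k x"
  by (simp add: sgnx_def)

lemma sgnx_fun: "sgnx k (f :: 'i \<Rightarrow> 'x::ab_group_add) = (\<lambda>j. sgnx k (f j))"
  by (auto simp: sgnx_def)

context
  fixes scA :: "'r::comm_ring_1 \<Rightarrow> 'a::ab_group_add \<Rightarrow> 'a"
    and Ac :: "int \<Rightarrow> 'a set" and mulA :: "'a \<Rightarrow> 'a \<Rightarrow> 'a" and oneA :: 'a
    and dA :: "'a \<Rightarrow> 'a"
  assumes C: "cdga scA Ac mulA oneA dA"
begin

lemma C_module: "module scA" using C unfolding cdga_def by (elim conjE) assumption
lemma C_sub0: "\<forall>i. module.subspace scA (Ac i)" using C unfolding cdga_def by (elim conjE) assumption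
lemma C_sub: "module.subspace scA (Ac i)" using C_sub0 by blast
lemma C_zero: "0 \<in> Ac i" using C_sub C_module by (simp add: module.subspace_def)
lemma C_addc: "x \<in> Ac i \<Longrightarrow> y \<in> Ac i \<Longrightarrow> x + y \<in> Ac i"
  using C_sub C_module by (simp add: module.subspace_def)
lemma C_scc: "x \<in> Ac i \<Longrightarrow> scA c x \<in> Ac i"
  using C_sub C_module by (simp add: module.subspace_def)
lemma C_negc: "x \<in> Ac i \<Longrightarrow> - x \<in> Ac i"
  using C_scc[of x i "-1"] C_module by (simp add: module.scale_minus_left module.scale_one)
lemma C_mulc0: "\<forall>i j. \<forall>a\<in>Ac i. \<forall>b\<in>Ac j. mulA a b \<in> Ac (i + j)"
  using C unfolding cdga_def by (elim conjE) assumption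
lemma C_mulc: "a \<in> Ac i \<Longrightarrow> b \<in> Ac j \<Longrightarrow> mulA a b \<in> Ac (i + j)"
  using C_mulc0 by blast
lemma C_add2: "\<forall>i j. \<forall>a\<in>Ac i. \<forall>a'\<in>Ac i. \<forall>b\<in>Ac j.
        mulA (a + a') b = mulA a b + mulA a' b \<and> mulA b (a + a') = mulA b a + mulA b a'"
  using C unfolding cdga_def by (elim conjE) assumption
lemma C_sc2: "\<forall>i j c. \<forall>a\<in>Ac i. \<forall>b\<in>Ac j.
        mulA (scA c a) b = scA c (mulA a b) \<and> mulA a (scA c b) = scA c (mulA a b)"
  using C unfolding cdga_def by (elim conjE) assumption
lemma C_one1: "oneA \<in> Ac 0"
  using C unfolding cdga_def by (elim conjE) assumption
lemma C_one3: "\<forall>i. \<forall>a\<in>Ac i. mulA oneA a = a \<and> mulA a oneA = a"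
  using C unfolding cdga_def by (elim conjE) assumption
lemma C_addl: "a \<in> Ac i \<Longrightarrow> a' \<in> Ac i \<Longrightarrow> b \<in> Ac j \<Longrightarrow> mulA (a + a') b = mulA a b + mulA a' b"
  using C_add2 by blast
lemma C_addr: "a \<in> Ac i \<Longrightarrow> a' \<in> Ac i \<Longrightarrow> b \<in> Ac j \<Longrightarrow> mulA b (a + a') = mulA b a + mulA b a'"
  using C_add2 by blast
lemma C_scl: "a \<in> Ac i \<Longrightarrow> b \<in> Ac j \<Longrightarrow> mulA (scA c a) b = scA c (mulA a b)"
  using C_sc2 by blast
lemma C_one: "a \<in> Ac i \<Longrightarrow> mulA oneA a = a"
  using C_one1 C_one3 by blast
lemma C_onec: "oneA \<in> Ac 0"
  using C_one1 C_one3 by blast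
lemma C_mul0l: "b \<in> Ac j \<Longrightarrow> mulA 0 b = 0"
  using C_addl[of 0 0 0 b j] C_zero by simp
lemma C_mul0r: "a \<in> Ac i \<Longrightarrow> mulA a 0 = 0"
  using C_addr[of 0 0 0 a i] C_zero by simp
lemma C_negr: "a \<in> Ac i \<Longrightarrow> b \<in> Ac j \<Longrightarrow> mulA a (- b) = - mulA a b"
  using C_addr[of b j "-b" a i] C_negc C_mul0r by (simp add: eq_neg_iff_add_eq_0 add.commute)

lemma Mcar_comp: "m \<in> Mcar Ac E i \<Longrightarrow> m j e \<in> Ac j"
  by (simp add: Mcar_def)

lemma Mcar_zero: "0 \<in> Mcar Ac E i"
  by (simp add: Mcar_def C_zero)

lemma Mcar_add: assumes "m \<in> Mcar Ac E i" "m' \<in> Mcar Ac E i" shows "m + m' \<in> Mcar Ac E i"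
proof -
  have "{(j, e). (m + m') j e \<noteq> 0} \<subseteq> {(j, e). m j e \<noteq> 0} \<union> {(j, e). m' j e \<noteq> 0}" by auto
  then show ?thesis using assms unfolding Mcar_def
    by (auto intro: C_addc finite_subset)
qed

lemma Mcar_neg: assumes "m \<in> Mcar Ac E i" shows "- m \<in> Mcar Ac E i"
proof -
  have "{(j, e). (- m) j e \<noteq> 0} = {(j, e). m j e \<noteq> 0}" by auto
  then show ?thesis using assms unfolding Mcar_def
    by (auto intro: C_negc)
qed

lemma Mcar_sgnx: "m \<in> Mcar Ac E i \<Longrightarrow> sgnx k m \<in> Mcar Ac E i"
  by (simp add: sgnx_def Mcar_neg)

lemma actM_Mcar: assumes a: "a \<in> Ac k" and m: "m \<in> Mcar Ac E j"
  shows "actM mulA k a m \<in> Mcar Ac E (k + j)"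
proof -
  have "{(j', e). actM mulA k a m j' e \<noteq> 0} \<subseteq> (\<lambda>(j, e). (j + k, e)) ` {(j, e). m j e \<noteq> 0}"
  proof
    fix x assume "x \<in> {(j', e). actM mulA k a m j' e \<noteq> 0}"
    then obtain j' e where x: "x = (j', e)" and nz: "mulA a (m (j' - k) e) \<noteq> 0"
      by (auto simp: actM_def)
    then have "m (j' - k) e \<noteq> 0" using C_mul0r a by auto
    then show "x \<in> (\<lambda>(j, e). (j + k, e)) ` {(j, e). m j e \<noteq> 0}"
      using x by (auto intro!: image_eqI[of _ _ "(j' - k, e)"])
  qed
  moreover have "finite {(j, e). m j e \<noteq> 0}" using m by (simp add: Mcar_def)
  ultimately have fin: "finite {(j', e). actM mulA k a m j' e \<noteq> 0}" by (meson finite_imageI finite_subset)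
  have comp: "actM mulA k a m j' e \<in> Ac j'" for j' e
    using C_mulc[OF a Mcar_comp[OF m, of "j' - k" e]] by (simp add: actM_def)
  have supp: "e \<in> E (k + j - j')" if "actM mulA k a m j' e \<noteq> 0" for j' e
  proof -
    have "m (j' - k) e \<noteq> 0" using that C_mul0r a by (auto simp: actM_def)
    then have "e \<in> E (j - (j' - k))" using m by (simp add: Mcar_def)
    then show ?thesis by (simp add: algebra_simps)
  qed
  show ?thesis using fin comp supp by (simp add: Mcar_def)
qed

lemma actM_addm: "a \<in> Ac k \<Longrightarrow> m \<in> Mcar Ac E j \<Longrightarrow> m' \<in> Mcar Ac E' j' \<Longrightarrow>
   actM mulA k a (m + m') = actM mulA k a m + actM mulA k a m'"
  by (auto simp: fun_eq_iff actM_def Mcar_def intro!: C_addr)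

lemma actM_negm: "a \<in> Ac k \<Longrightarrow> m \<in> Mcar Ac E j \<Longrightarrow>
   actM mulA k a (- m) = - actM mulA k a m"
  by (auto simp: fun_eq_iff actM_def Mcar_def intro!: C_negr)

lemma actM_sgnxm: "a \<in> Ac k \<Longrightarrow> m \<in> Mcar Ac E j \<Longrightarrow>
   actM mulA k a (sgnx l m) = sgnx l (actM mulA k a m)"
  by (simp add: sgnx_def actM_negm)

lemma actM_adda: "a \<in> Ac k \<Longrightarrow> a' \<in> Ac k \<Longrightarrow> m \<in> Mcar Ac E j \<Longrightarrow>
   actM mulA k (a + a') m = actM mulA k a m + actM mulA k a' m"
  by (auto simp: fun_eq_iff actM_def Mcar_def intro!: C_addl)

lemma actM_sca: "a \<in> Ac k \<Longrightarrow> m \<in> Mcar Ac E j \<Longrightarrow>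
   actM mulA k (scA c a) m = scM scA c (actM mulA k a m)"
  by (auto simp: fun_eq_iff actM_def scM_def Mcar_def intro!: C_scl)

lemma actM_zeroa: "m \<in> Mcar Ac E j \<Longrightarrow> actM mulA k 0 m = 0"
  by (auto simp: fun_eq_iff actM_def Mcar_def intro!: C_mul0l)

lemma actM_zerom: "a \<in> Ac k \<Longrightarrow> actM mulA k a 0 = 0"
  by (auto simp: fun_eq_iff actM_def intro!: C_mul0r)

lemma actM_one: "m \<in> Mcar Ac E j \<Longrightarrow> actM mulA 0 oneA m = m"
  by (auto simp: fun_eq_iff actM_def Mcar_def intro!: C_one)

lemma scM_sgnx: "scM scA c (sgnx l m) = sgnx l (scM scA c m)"
  using C_module by (auto simp: fun_eq_iff sgnx_def scM_def module.scale_minus_right)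

lemma scM_zero: "scM scA c 0 = 0"
  using C_module by (auto simp: fun_eq_iff scM_def module.scale_zero_right)

end

lemma rlin_add: "rlin sc sc' X Y f \<Longrightarrow> x \<in> X \<Longrightarrow> y \<in> X \<Longrightarrow> f (x + y) = f x + f y"
  by (simp add: rlin_def)
lemma rlin_sc: "rlin sc sc' X Y f \<Longrightarrow> x \<in> X \<Longrightarrow> f (sc c x) = sc' c (f x)"
  by (simp add: rlin_def)
lemma rlin_in: "rlin sc sc' X Y f \<Longrightarrow> x \<in> X \<Longrightarrow> f x \<in> Y"
  by (auto simp: rlin_def)
lemma rlin_neg: assumes "rlin sc sc' X Y f" "x \<in> X" "- x \<in> X" "0 \<in> X" shows "f (- x) = - f x"
proof -
  have "f 0 = 0" using rlin_add[OF assms(1) assms(4) assms(4)] by simp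
  moreover have "f 0 = f x + f (- x)" using rlin_add[OF assms(1) assms(2) assms(3)] by simp
  ultimately show ?thesis by (simp add: eq_neg_iff_add_eq_0 add.commute)
qed
lemma rlin_sgnx: "rlin sc sc' X Y f \<Longrightarrow> x \<in> X \<Longrightarrow> - x \<in> X \<Longrightarrow> 0 \<in> X \<Longrightarrow> f (sgnx k x) = sgnx k (f x)"
  by (simp add: sgnx_def rlin_neg)


lemma sgnx_sgnx: "sgnx k (sgnx l x) = sgnx (k + l) x"
  by (simp add: sgnx_def)

theorem lemma2p11:
  fixes scA :: "'r::comm_ring_1 \<Rightarrow> 'a::ab_group_add \<Rightarrow> 'a"
    and Ac :: "int \<Rightarrow> 'a set" and mulA :: "'a \<Rightarrow> 'a \<Rightarrow> 'a" and oneA :: 'a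
    and dA :: "'a \<Rightarrow> 'a" and r :: "int \<Rightarrow> nat" and gam :: "int \<Rightarrow> nat \<Rightarrow> 'a" and t :: 'r
    and E :: "int \<Rightarrow> 'e set"
    and \<xi> \<tau> \<delta> \<alpha> :: "int \<Rightarrow> ('e, 'a) melt \<Rightarrow> ('e, 'a) melt"
    and E' :: "int \<Rightarrow> 'f set"
    and \<xi>' \<tau>' \<delta>' \<alpha>' :: "int \<Rightarrow> ('f, 'a) melt \<Rightarrow> ('f, 'a) melt"
    and p :: int
    and S :: "int \<Rightarrow> ('e, 'a) melt \<times> ('e, 'a) melt \<Rightarrow> ('f, 'a) melt \<times> ('f, 'a) melt"
  assumes "noetherian_cring TYPE('r)"
    and "cdga scA Ac mulA oneA dA"
    and "fixed_bases scA Ac r gam"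
    and "semifree_N scA Ac mulA dA t E \<xi> \<tau> \<delta> \<alpha>"
    and "semifree_N scA Ac mulA dA t E' \<xi>' \<tau>' \<delta>' \<alpha>'"
  shows "dg_hom scA Ac mulA E E' p S \<longleftrightarrow>
    rcomplex_hom scA Ac E E' p S \<and>
    (\<exists>z v. (\<forall>i. rlin (scM scA) (scM scA) (Mcar Ac E i) (Mcar Ac E' (i + p)) (z i)) \<and>
           (\<forall>i. rlin (scM scA) (scM scA) (Mcar Ac E i) (Mcar Ac E' (i + p - 1)) (v i)) \<and>
           (\<forall>i. \<forall>x\<in>Mcar Ac E (i - 1). \<forall>y\<in>Mcar Ac E i.
               S i (x, y) = (sgnx p (z (i - 1) x) + v i y, z i y)) \<and>
           (\<forall>i j. \<forall>s\<in>{1..r i}. \<forall>m\<in>Mcar Ac E j.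
               v (i + j) (actM mulA i (gam i s) m) = sgnx (i * (p + 1)) (actM mulA i (gam i s) (v j m)) \<and>
               z (i + j) (actM mulA i (gam i s) m) = sgnx (i * p) (actM mulA i (gam i s) (z j m))))"
proof -
  have C: "cdga scA Ac mulA oneA dA" by fact
  have FB: "fixed_bases scA Ac r gam" by fact
  have Mz: "\<And>E i. 0 \<in> Mcar Ac E i" using Mcar_zero[OF C] .
  have Ncar_iff: "\<And>E i x y. (x, y) \<in> Ncar Ac E i \<longleftrightarrow> x \<in> Mcar Ac E (i - 1) \<and> y \<in> Mcar Ac E i"
    by (simp add: Ncar_def)
  show ?thesis
  proof
    assume H: "dg_hom scA Ac mulA E E' p S"
    have RC: "rcomplex_hom scA Ac E E' p S" using H by (simp add: dg_hom_def)
    have Hm: "\<And>i j b n. b \<in> Bcar Ac i \<Longrightarrow> n \<in> Ncar Ac E j \<Longrightarrow>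
        S (i + j) (actN mulA i b n) = sgnx (p * i) (actN mulA i b (S j n))"
      using H by (simp add: dg_hom_def)
    have Srl: "\<And>i. rlin (scN scA) (scN scA) (Ncar Ac E i) (Ncar Ac E' (i + p)) (S i)"
      using RC by (simp add: rcomplex_hom_def)
    define z where "z = (\<lambda>i y. snd (S i (0, y)))"
    define v where "v = (\<lambda>i y. fst (S i (0, y)))"
    have n0: "(0, y) \<in> Ncar Ac E i" if "y \<in> Mcar Ac E i" for y i
      using that Mz by (simp add: Ncar_def)
    have Sin: "S i (0, y) \<in> Ncar Ac E' (i + p)" if "y \<in> Mcar Ac E i" for y i
      using rlin_in[OF Srl n0[OF that]] .
    have S0: "S i (0, y) = (v i y, z i y)" for i y by (simp add: z_def v_def)
    have zin: "z i y \<in> Mcar Ac E' (i + p)" if "y \<in> Mcar Ac E i" for y i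
      using Sin[OF that] by (simp add: z_def Ncar_def mem_Times_iff)
    have vin: "v i y \<in> Mcar Ac E' (i + p - 1)" if "y \<in> Mcar Ac E i" for y i
      using Sin[OF that] by (simp add: v_def Ncar_def mem_Times_iff)
    have Sadd: "S i (0, y + y') = S i (0, y) + S i (0, y')"
      if "y \<in> Mcar Ac E i" "y' \<in> Mcar Ac E i" for y y' i
      using rlin_add[OF Srl n0[OF that(1)] n0[OF that(2)]] by simp
    have Ssc: "S i (0, scM scA c y) = scN scA c (S i (0, y))"
      if "y \<in> Mcar Ac E i" for y i c
      using rlin_sc[OF Srl n0[OF that], of c] by (simp add: scN_def scM_zero[OF C])
    have zrl: "rlin (scM scA) (scM scA) (Mcar Ac E i) (Mcar Ac E' (i + p)) (z i)" for i
    proof -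
      have "z i ` Mcar Ac E i \<subseteq> Mcar Ac E' (i + p)" using zin by blast
      moreover have "\<forall>x\<in>Mcar Ac E i. \<forall>y\<in>Mcar Ac E i. z i (x + y) = z i x + z i y"
        using Sadd unfolding z_def by simp
      moreover have "\<forall>c. \<forall>x\<in>Mcar Ac E i. z i (scM scA c x) = scM scA c (z i x)"
        using Ssc unfolding z_def scN_def by simp
      ultimately show ?thesis unfolding rlin_def by blast
    qed
    have vrl: "rlin (scM scA) (scM scA) (Mcar Ac E i) (Mcar Ac E' (i + p - 1)) (v i)" for i
    proof -
      have "v i ` Mcar Ac E i \<subseteq> Mcar Ac E' (i + p - 1)" using vin by blast
      moreover have "\<forall>x\<in>Mcar Ac E i. \<forall>y\<in>Mcar Ac E i. v i (x + y) = v i x + v i y"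
        using Sadd unfolding v_def by simp
      moreover have "\<forall>c. \<forall>x\<in>Mcar Ac E i. v i (scM scA c x) = scM scA c (v i x)"
        using Ssc unfolding v_def scN_def by simp
      ultimately show ?thesis unfolding rlin_def by blast
    qed
    have b1: "(oneA, 0) \<in> Bcar Ac 1" using C_onec[OF C] C_zero[OF C] by (simp add: Bcar_def)
    have Sx0: "S i (x, 0) = (sgnx p (z (i - 1) x), 0)" if x: "x \<in> Mcar Ac E (i - 1)" for x i
    proof -
      have "actN mulA 1 (oneA, 0) (0, x) = (x, 0)"
        using actM_one[OF C x] actM_zeroa[OF C x] C_mul0r[OF C C_zero[OF C]]
        by (simp add: actN_def actM_def sgnx_def fun_eq_iff)
      moreover have "actN mulA 1 (oneA, 0) (S (i - 1) (0, x)) = (z (i - 1) x, 0)"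
        using actM_one[OF C zin[OF x]] actM_zeroa[OF C vin[OF x]] actM_zeroa[OF C zin[OF x]]
        by (simp add: actN_def S0)
      ultimately show ?thesis using Hm[OF b1 n0[OF x]] by (simp add: sgnx_pair)
    qed
    have Sxy: "S i (x, y) = (sgnx p (z (i - 1) x) + v i y, z i y)"
      if x: "x \<in> Mcar Ac E (i - 1)" and y: "y \<in> Mcar Ac E i" for x y i
    proof -
      have "(x, 0) \<in> Ncar Ac E i" using x Mz by (simp add: Ncar_def)
      then have "S i ((x, 0) + (0, y)) = S i (x, 0) + S i (0, y)"
        using rlin_add[OF Srl _ n0[OF y]] by blast
      then show ?thesis using Sx0[OF x] by (simp add: S0)
    qed
    have Bas: "v (i + j) (actM mulA i (gam i s) m) = sgnx (i * (p + 1)) (actM mulA i (gam i s) (v j m)) \<and>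
               z (i + j) (actM mulA i (gam i s) m) = sgnx (i * p) (actM mulA i (gam i s) (z j m))"
      if s: "s \<in> {1..r i}" and m: "m \<in> Mcar Ac E j" for i j s m
    proof -
      have g: "gam i s \<in> Ac i" using FB s by (simp add: fixed_bases_def)
      have bb: "(0, gam i s) \<in> Bcar Ac i" using g C_zero[OF C] by (simp add: Bcar_def)
      have "actN mulA i (0, gam i s) (0, m) = (0, actM mulA i (gam i s) m)"
        using actM_zeroa[OF C m] C_mul0r[OF C g] by (simp add: actN_def actM_def sgnx_def fun_eq_iff)
      moreover have "actN mulA i (0, gam i s) (S j (0, m)) =
          (sgnx i (actM mulA i (gam i s) (v j m)), actM mulA i (gam i s) (z j m))"
        using actM_zeroa[OF C zin[OF m]] by (simp add: actN_def S0)
      ultimately have "S (i + j) (0, actM mulA i (gam i s) m) =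
          (sgnx (p * i) (sgnx i (actM mulA i (gam i s) (v j m))), sgnx (p * i) (actM mulA i (gam i s) (z j m)))"
        using Hm[OF bb n0[OF m]] by (simp add: sgnx_pair)
      moreover have "p * i + i = i * (p + 1)" by (simp add: algebra_simps)
      ultimately show ?thesis by (simp add: S0 sgnx_sgnx mult.commute)
    qed
    show "rcomplex_hom scA Ac E E' p S \<and>
    (\<exists>z v. (\<forall>i. rlin (scM scA) (scM scA) (Mcar Ac E i) (Mcar Ac E' (i + p)) (z i)) \<and>
           (\<forall>i. rlin (scM scA) (scM scA) (Mcar Ac E i) (Mcar Ac E' (i + p - 1)) (v i)) \<and>
           (\<forall>i. \<forall>x\<in>Mcar Ac E (i - 1). \<forall>y\<in>Mcar Ac E i.
               S i (x, y) = (sgnx p (z (i - 1) x) + v i y, z i y)) \<and>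
           (\<forall>i j. \<forall>s\<in>{1..r i}. \<forall>m\<in>Mcar Ac E j.
               v (i + j) (actM mulA i (gam i s) m) = sgnx (i * (p + 1)) (actM mulA i (gam i s) (v j m)) \<and>
               z (i + j) (actM mulA i (gam i s) m) = sgnx (i * p) (actM mulA i (gam i s) (z j m))))"
      apply (rule conjI[OF RC])
      apply (rule exI[of _ z], rule exI[of _ v])
      using zrl vrl Sxy Bas by simp
  next
    assume R: "rcomplex_hom scA Ac E E' p S \<and>
    (\<exists>z v. (\<forall>i. rlin (scM scA) (scM scA) (Mcar Ac E i) (Mcar Ac E' (i + p)) (z i)) \<and>
           (\<forall>i. rlin (scM scA) (scM scA) (Mcar Ac E i) (Mcar Ac E' (i + p - 1)) (v i)) \<and>
           (\<forall>i. \<forall>x\<in>Mcar Ac E (i - 1). \<forall>y\<in>Mcar Ac E i.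
               S i (x, y) = (sgnx p (z (i - 1) x) + v i y, z i y)) \<and>
           (\<forall>i j. \<forall>s\<in>{1..r i}. \<forall>m\<in>Mcar Ac E j.
               v (i + j) (actM mulA i (gam i s) m) = sgnx (i * (p + 1)) (actM mulA i (gam i s) (v j m)) \<and>
               z (i + j) (actM mulA i (gam i s) m) = sgnx (i * p) (actM mulA i (gam i s) (z j m))))"
    then have RC: "rcomplex_hom scA Ac E E' p S" by blast
    from R obtain z v where
      zrl: "\<And>i. rlin (scM scA) (scM scA) (Mcar Ac E i) (Mcar Ac E' (i + p)) (z i)" and
      vrl: "\<And>i. rlin (scM scA) (scM scA) (Mcar Ac E i) (Mcar Ac E' (i + p - 1)) (v i)" and
      Sxy: "\<And>i x y. x \<in> Mcar Ac E (i - 1) \<Longrightarrow> y \<in> Mcar Ac E i \<Longrightarrow>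
               S i (x, y) = (sgnx p (z (i - 1) x) + v i y, z i y)" and
      Bas: "\<And>i j s m. s \<in> {1..r i} \<Longrightarrow> m \<in> Mcar Ac E j \<Longrightarrow>
               v (i + j) (actM mulA i (gam i s) m) = sgnx (i * (p + 1)) (actM mulA i (gam i s) (v j m)) \<and>
               z (i + j) (actM mulA i (gam i s) m) = sgnx (i * p) (actM mulA i (gam i s) (z j m))"
      by (elim conjE exE) blast
    have md: "module scA" using C_module[OF C] .
    have G: "module.span scA (gam k ` {1..r k}) = Ac k" "gam k ` {1..r k} \<subseteq> Ac k" for k
      using FB by (auto simp: fixed_bases_def)
    have zin: "z i y \<in> Mcar Ac E' (i + p)" if "y \<in> Mcar Ac E i" for y i
      using rlin_in[OF zrl that] .
    have vin: "v i y \<in> Mcar Ac E' (i + p - 1)" if "y \<in> Mcar Ac E i" for y i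
      using rlin_in[OF vrl that] .
    have Zx: "z (k + l) (actM mulA k a m) = sgnx (k * p) (actM mulA k a (z l m))"
      if a: "a \<in> Ac k" and m: "m \<in> Mcar Ac E l" for k l a m
    proof (rule lin_agree[OF md C_sub[OF C] G(1) G(2), where sc = "scM scA", OF _ _ _ _ _ a])
      show "\<forall>a\<in>Ac k. \<forall>b\<in>Ac k. z (k + l) (actM mulA k (a + b) m) =
          z (k + l) (actM mulA k a m) + z (k + l) (actM mulA k b m)"
        using actM_adda[OF C _ _ m] rlin_add[OF zrl actM_Mcar[OF C _ m] actM_Mcar[OF C _ m]] by simp
      show "\<forall>a\<in>Ac k. \<forall>b\<in>Ac k. sgnx (k * p) (actM mulA k (a + b) (z l m)) =
          sgnx (k * p) (actM mulA k a (z l m)) + sgnx (k * p) (actM mulA k b (z l m))"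
        using actM_adda[OF C _ _ zin[OF m]] by (simp add: sgnx_add)
      show "\<forall>c. \<forall>a\<in>Ac k. z (k + l) (actM mulA k (scA c a) m) = scM scA c (z (k + l) (actM mulA k a m))"
        using actM_sca[OF C _ m] rlin_sc[OF zrl actM_Mcar[OF C _ m]] by simp
      show "\<forall>c. \<forall>a\<in>Ac k. sgnx (k * p) (actM mulA k (scA c a) (z l m)) = scM scA c (sgnx (k * p) (actM mulA k a (z l m)))"
        using actM_sca[OF C _ zin[OF m]] by (simp add: scM_sgnx[OF C])
      show "\<forall>g\<in>gam k ` {1..r k}. z (k + l) (actM mulA k g m) = sgnx (k * p) (actM mulA k g (z l m))"
        using Bas[OF _ m] by blast
    qed
    have Vx: "v (k + l) (actM mulA k a m) = sgnx (k * (p + 1)) (actM mulA k a (v l m))"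
      if a: "a \<in> Ac k" and m: "m \<in> Mcar Ac E l" for k l a m
    proof (rule lin_agree[OF md C_sub[OF C] G(1) G(2), where sc = "scM scA", OF _ _ _ _ _ a])
      show "\<forall>a\<in>Ac k. \<forall>b\<in>Ac k. v (k + l) (actM mulA k (a + b) m) =
          v (k + l) (actM mulA k a m) + v (k + l) (actM mulA k b m)"
        using actM_adda[OF C _ _ m] rlin_add[OF vrl actM_Mcar[OF C _ m] actM_Mcar[OF C _ m]] by simp
      show "\<forall>a\<in>Ac k. \<forall>b\<in>Ac k. sgnx (k * (p + 1)) (actM mulA k (a + b) (v l m)) =
          sgnx (k * (p + 1)) (actM mulA k a (v l m)) + sgnx (k * (p + 1)) (actM mulA k b (v l m))"
        using actM_adda[OF C _ _ vin[OF m]] by (simp add: sgnx_add)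
      show "\<forall>c. \<forall>a\<in>Ac k. v (k + l) (actM mulA k (scA c a) m) = scM scA c (v (k + l) (actM mulA k a m))"
        using actM_sca[OF C _ m] rlin_sc[OF vrl actM_Mcar[OF C _ m]] by simp
      show "\<forall>c. \<forall>a\<in>Ac k. sgnx (k * (p + 1)) (actM mulA k (scA c a) (v l m)) = scM scA c (sgnx (k * (p + 1)) (actM mulA k a (v l m)))"
        using actM_sca[OF C _ vin[OF m]] by (simp add: scM_sgnx[OF C])
      show "\<forall>g\<in>gam k ` {1..r k}. v (k + l) (actM mulA k g m) = sgnx (k * (p + 1)) (actM mulA k g (v l m))"
        using Bas[OF _ m] by blast
    qed
    have main: "S (i + j) (actN mulA i b n) = sgnx (p * i) (actN mulA i b (S j n))"
      if b: "b \<in> Bcar Ac i" and n: "n \<in> Ncar Ac E j" for i j b n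
    proof -
      obtain a' a where ba: "b = (a', a)" and a': "a' \<in> Ac (i - 1)" and a: "a \<in> Ac i"
        using b by (auto simp: Bcar_def)
      obtain x y where nxy: "n = (x, y)" and x: "x \<in> Mcar Ac E (j - 1)" and y: "y \<in> Mcar Ac E j"
        using n by (auto simp: Ncar_def)
      define Y1 where "Y1 = actM mulA (i - 1) a' y"
      define X2 where "X2 = actM mulA i a x"
      have e1: "i - 1 + j = i + j - 1" "i + (j - 1) = i + j - 1" by simp_all
      have Y1in: "Y1 \<in> Mcar Ac E (i + j - 1)" using actM_Mcar[OF C a' y] e1 by (simp add: Y1_def)
      have X2in: "X2 \<in> Mcar Ac E (i + j - 1)" using actM_Mcar[OF C a x] e1 by (simp add: X2_def)
      have X2n: "- X2 \<in> Mcar Ac E (i + j - 1)" using Mcar_neg[OF C X2in] .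
      have ayin: "actM mulA i a y \<in> Mcar Ac E (i + j)" using actM_Mcar[OF C a y] .
      have lhs1: "actN mulA i b n = (Y1 + sgnx i X2, actM mulA i a y)"
        by (simp add: actN_def ba nxy Y1_def X2_def)
      have zsum: "z (i + j - 1) (Y1 + sgnx i X2) = z (i + j - 1) Y1 + sgnx i (z (i + j - 1) X2)"
        using rlin_add[OF zrl Y1in Mcar_sgnx[OF C X2in]] rlin_sgnx[OF zrl X2in X2n Mz] by simp
      have zY1: "z (i + j - 1) Y1 = sgnx ((i - 1) * p) (actM mulA (i - 1) a' (z j y))"
        using Zx[OF a' y] e1 by (simp add: Y1_def)
      have zX2: "z (i + j - 1) X2 = sgnx (i * p) (actM mulA i a (z (j - 1) x))"
        using Zx[OF a x] e1 by (simp add: X2_def)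
      have LHS: "S (i + j) (actN mulA i b n) =
          (sgnx p (sgnx ((i - 1) * p) (actM mulA (i - 1) a' (z j y)) + sgnx i (sgnx (i * p) (actM mulA i a (z (j - 1) x))))
             + sgnx (i * (p + 1)) (actM mulA i a (v j y)),
           sgnx (i * p) (actM mulA i a (z j y)))"
        using Sxy[of "Y1 + sgnx i X2" "i + j" "actM mulA i a y"] Mcar_add[OF C Y1in Mcar_sgnx[OF C X2in]] ayin
          zsum zY1 zX2 Vx[OF a y] Zx[OF a y] by (simp add: lhs1)
      have zxin: "sgnx p (z (j - 1) x) \<in> Mcar Ac E' (j - 1 + p)" using Mcar_sgnx[OF C zin[OF x]] .
      have RHS: "sgnx (p * i) (actN mulA i b (S j n)) =
          sgnx (p * i) (actM mulA (i - 1) a' (z j y) + sgnx i (sgnx p (actM mulA i a (z (j - 1) x)) + actM mulA i a (v j y)),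
             actM mulA i a (z j y))"
        using Sxy[OF x y] actM_addm[OF C a zxin vin[OF y]] actM_sgnxm[OF C a zin[OF x]]
        by (simp add: actN_def ba nxy)
      show ?thesis unfolding LHS RHS
        by (cases "even i"; cases "even p"; simp add: sgnx_def algebra_simps)
    qed
    show "dg_hom scA Ac mulA E E' p S" using RC main by (simp add: dg_hom_def)
  qed
qed

end
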